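(* For every hypothesis class $\mathcal{F}\subseteq\mathcal{Y}^{\mathcal{X}}$ (with $\mathcal{Y}$ finite), $\mathrm{DFFdim}(\mathrm{OtD}(\mathcal{F}))\geq\mathrm{Ldim}(\mathcal{F})$.
   Context: Setting. A teacher over $\mathcal{X},\mathcal{Y},\Phi$ ($\Phi$ a set of Boolean features on $\mathcal{X}$, $\bot$ a null symbol) is a pair $T=(\ell,\psi)$ with $\ell:\mathcal{X}\to\mathcal{Y}$ and $\psi:\mathcal{X}\times\mathcal{X}\to\Phi\cup\{\bot\}$ such that whenever $\ell(x)\neq\ell(\hat x)$, $\phi:=\psi(x,\hat x)\in\Phi$, $\phi(x)=1$ and $\phi(\hat x)=0$. A teacher class is a set of teachers. A history is a non-empty set $H\subseteq\mathcal{X}\times\mathcal{Y}$, $H_{\mathcal{X}}=\{x:\exists y,(x,y)\in H\}$; a teacher $(\ell,\psi)$ is consistent with $H$ if $\ell(x)=y$ for all $(x,y)\in H$; $\mathcal{T}_H$ is the set of teachers in $\mathcal{T}$ consistent with $H$. DFF dimension. A DFF tree is a rooted tree whose nodes are triples $\langle y,\phi,x\rangle$ with $y\in\mathcal{Y}\cup\{\bot\}$, $\phi\in\Phi\cup\{\bot\}$, $x\in\mathcal{X}\cup\{\bot\}$, such that the root has $y=\phi=\bot$, a node has $x=\bot$ iff it is a leaf, every edge is labeled by a pair $(\hat x,\hat y)\in\mathcal{X}\times\mathcal{Y}$, and every non-root node $\langle y,\phi,x\rangle$ with incoming edge $(\hat x,\hat y)$ has $\phi\neq\bot$ whenever $y\neq\hat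 y$. For a parent–child pair $\langle\cdot,\cdot,x\rangle\xrightarrow{(\hat x,\hat y)}\langle y,\phi,\cdot\rangle$ on a path, $(x,y)$ is called a labeled example in that path. A path from the root is consistent with a teacher $(\ell,\psi)$ if for every such parent–child pair on it, $\ell(x)=y$ and, if $y\neq\hat y$, $\psi(x,\hat x)=\phi$. Given $\mathcal{T}$ consistent with $H$, a DFF tree is shattered by $\mathcal{T}$ and $H$ if: (1) every non-root node $\langle y,\phi,x\rangle$ with incoming edge $(\hat x,\hat y)$ has $y\neq\hat y$; (2) the labels of the outgoing edges of each non-leaf node $v$ are exactly the pairs that belong to $H$ or are labeled examples in the path from the root to $v$; (3) every root-to-leaf path is consistent with some teacher in $\mathcal{T}_H$; (4) all root-to-leaf paths have the same number of edges, called the height. $\mathrm{DFFdim}(\mathcal{T},H)$ is the maximal height of a DFF tree shattered by $\mathcal{T}$ and $H$. $\mathrm{Ldim}$ is the (multiclass) Littlestone dimension: the maximal depth of a complete binary tree whose internal nodes are labeled by examples and whose two outgoing edges at each internal node are labeled by two distinct labels, such that for every root-to-leaf path some $f\in\mathcal{F}$ agrees with all (example, edge label) pairs on the path. Mapping OtD: given $\mathcal{F}\subseteq\mathcal{Y}^{\mathcal{X}}$, for each $y\in\mathcal{Y}$ let $\star_y\notin\mathcal{X}$ be a new distinct point, $H=\{(\star_y,y):y\in\mathcal{Y}\}$, $\mathcal{X}'=\mathcal{X}\cup H_{\mathcal{X}}$, and $\Phi=\{\mathbb{I}[x]:x\in\mathcal{X}'\}$ where $\mathbb{I}[x](x')=1$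 iff $x'=x$. For $f\in\mathcal{F}$ let $f':\mathcal{X}'\to\mathcal{Y}$ extend $f$ by $f'(\star_y)=y$, let $\psi_f(x,x')=\mathbb{I}[x]$, and $T_f=(f',\psi_f)$. Then $\mathrm{OtD}(\mathcal{F})=(\mathcal{T}_{\mathcal{F}},H)$ with $\mathcal{T}_{\mathcal{F}}=\{T_f:f\in\mathcal{F}\}$ (a teacher class over $\mathcal{X}',\mathcal{Y},\Phi$). *)

theory Defs
  imports Main "HOL-Library.Extended_Nat"
begin

(* Boolean features on a domain 'a are predicates 'a \<Rightarrow> bool; the null symbol \<bottom>
   is rendered as None. A teacher is a pair (l, psi). *)
type_synonym ('a,'b) teacher = "('a \<Rightarrow> 'b) \<times> ('a \<Rightarrow> 'a \<Rightarrow> ('a \<Rightarrow> bool) option)"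

definition is_teacher :: "('a \<Rightarrow> bool) set \<Rightarrow> ('a,'b) teacher \<Rightarrow> bool" where
  "is_teacher Phi T \<longleftrightarrow>
     (\<forall>x. \<forall>x'. \<forall>\<phi>. snd T x x' = Some \<phi> \<longrightarrow> \<phi> \<in> Phi) \<and>
     (\<forall>x x'. fst T x \<noteq> fst T x' \<longrightarrow>
        (\<exists>\<phi>. snd T x x' = Some \<phi> \<and> \<phi> \<in> Phi \<and> \<phi> x \<and> \<not> \<phi> x'))"

definition consistent_hist :: "('a,'b) teacher \<Rightarrow> ('a \<times> 'b) set \<Rightarrow> bool" where
  "consistent_hist T H \<longleftrightarrow> (\<forall>(x,y)\<in>H. fst T x = y)"

definition teachers_consistent :: "('a,'b) teacher set \<Rightarrow> ('a \<times> 'b) set \<Rightarrow> ('a,'b) teacher set" where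
  "teachers_consistent TT H = {T \<in> TT. consistent_hist T H}"

(* A node <y, phi, x>; outgoing edges are given by a partial map from edge labels
   (x_hat, y_hat) to children (so each edge label occurs at most once). *)
datatype ('a,'b) dtree =
  DNode (dlab: "'b option") (dfeat: "('a \<Rightarrow> bool) option") (dpt: "'a option")
        (dch: "'a \<times> 'b \<Rightarrow> ('a,'b) dtree option")

fun subtree :: "('a,'b) dtree \<Rightarrow> ('a \<times> 'b) list \<Rightarrow> ('a,'b) dtree option" where
  "subtree t [] = Some t"
| "subtree t (e # es) = (case dch t e of None \<Rightarrow> None | Some c \<Rightarrow> subtree c es)"

definition is_node :: "('a,'b) dtree \<Rightarrow> ('a \<times> 'b) list \<Rightarrow> bool" where
  "is_node t p \<longleftrightarrow> subtree t p \<noteq> None"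

definition nd :: "('a,'b) dtree \<Rightarrow> ('a \<times> 'b) list \<Rightarrow> ('a,'b) dtree" where
  "nd t p = the (subtree t p)"

definition is_leaf :: "('a,'b) dtree \<Rightarrow> bool" where
  "is_leaf v \<longleftrightarrow> (\<forall>e. dch v e = None)"

definition out_labels :: "('a,'b) dtree \<Rightarrow> ('a \<times> 'b) set" where
  "out_labels v = {e. dch v e \<noteq> None}"

definition dff_tree :: "('a \<Rightarrow> bool) set \<Rightarrow> ('a,'b) dtree \<Rightarrow> bool" where
  "dff_tree Phi t \<longleftrightarrow>
     dlab t = None \<and> dfeat t = None \<and>
     (\<forall>p. is_node t p \<longrightarrow> (dpt (nd t p) = None \<longleftrightarrow> is_leaf (nd t p))) \<and>
     (\<forall>p. is_node t p \<longrightarrow> (\<forall>\<phi>. dfeat (nd t p) = Some \<phi> \<longrightarrow> \<phi> \<in> Phi)) \<and>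
     (\<forall>p e. is_node t (p @ [e]) \<longrightarrow>
        dlab (nd t (p @ [e])) \<noteq> Some (snd e) \<longrightarrow> dfeat (nd t (p @ [e])) \<noteq> None)"

(* labeled examples (x,y) in the root path p: x from the parent, y from the child *)
definition path_examples :: "('a,'b) dtree \<Rightarrow> ('a \<times> 'b) list \<Rightarrow> ('a \<times> 'b) set" where
  "path_examples t p =
     {(x,y) | i x y. i < length p \<and> dpt (nd t (take i p)) = Some x \<and>
                     dlab (nd t (take (Suc i) p)) = Some y}"

definition path_consistent :: "('a,'b) dtree \<Rightarrow> ('a \<times> 'b) list \<Rightarrow> ('a,'b) teacher \<Rightarrow> bool" where
  "path_consistent t p T \<longleftrightarrow>
     (\<forall>i < length p. \<forall>x. dpt (nd t (take i p)) = Some x \<longrightarrow>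
        (dlab (nd t (take (Suc i) p)) = Some (fst T x) \<and>
         (fst T x \<noteq> snd (p ! i) \<longrightarrow> snd T x (fst (p ! i)) = dfeat (nd t (take (Suc i) p)))))"

definition dff_shattered :: "('a \<Rightarrow> bool) set \<Rightarrow> ('a,'b) teacher set \<Rightarrow> ('a \<times> 'b) set
                              \<Rightarrow> ('a,'b) dtree \<Rightarrow> nat \<Rightarrow> bool" where
  "dff_shattered Phi TT H t d \<longleftrightarrow>
     dff_tree Phi t \<and>
     (\<forall>p e. is_node t (p @ [e]) \<longrightarrow> dlab (nd t (p @ [e])) \<noteq> Some (snd e)) \<and>
     (\<forall>p. is_node t p \<and> \<not> is_leaf (nd t p) \<longrightarrow> out_labels (nd t p) = H \<union> path_examples t p) \<and>
     (\<forall>p. is_node t p \<and> is_leaf (nd t p) \<longrightarrow>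
        (\<exists>T \<in> teachers_consistent TT H. path_consistent t p T)) \<and>
     (\<forall>p. is_node t p \<and> is_leaf (nd t p) \<longrightarrow> length p = d)"

definition DFFdim :: "('a \<Rightarrow> bool) set \<Rightarrow> ('a,'b) teacher set \<Rightarrow> ('a \<times> 'b) set \<Rightarrow> enat" where
  "DFFdim Phi TT H = Sup {enat d | d. \<exists>t. dff_shattered Phi TT H t d}"

datatype ('x,'y) ltree = LLeaf | LInner 'x 'y "('x,'y) ltree" 'y "('x,'y) ltree"

fun lcomplete :: "('x,'y) ltree \<Rightarrow> nat \<Rightarrow> bool" where
  "lcomplete LLeaf d = (d = 0)"
| "lcomplete (LInner x a l b r) d =
     (case d of 0 \<Rightarrow> False | Suc n \<Rightarrow> a \<noteq> b \<and> lcomplete l n \<and> lcomplete r n)"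

fun lpaths :: "('x,'y) ltree \<Rightarrow> ('x \<times> 'y) list set" where
  "lpaths LLeaf = {[]}"
| "lpaths (LInner x a l b r) = (\<lambda>q. (x,a) # q) ` lpaths l \<union> (\<lambda>q. (x,b) # q) ` lpaths r"

definition Ldim :: "('x \<Rightarrow> 'y) set \<Rightarrow> enat" where
  "Ldim F = Sup {enat d | d. \<exists>t. lcomplete t d \<and>
                   (\<forall>q \<in> lpaths t. \<exists>f \<in> F. \<forall>(x,y) \<in> set q. f x = y)}"

datatype ('x,'y) ext = Orig 'x | Star 'y

definition ind :: "'a \<Rightarrow> 'a \<Rightarrow> bool" where
  "ind x = (\<lambda>x'. x' = x)"

fun ext_fun :: "('x \<Rightarrow> 'y) \<Rightarrow> ('x,'y) ext \<Rightarrow> 'y" where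
  "ext_fun f (Orig x) = f x"
| "ext_fun f (Star y) = y"

definition teacher_of :: "('x \<Rightarrow> 'y) \<Rightarrow> (('x,'y) ext, 'y) teacher" where
  "teacher_of f = (ext_fun f, \<lambda>x x'. Some (ind x))"

definition OtD_hist :: "(('x,'y) ext \<times> 'y) set" where
  "OtD_hist = {(Star y, y) | y. True}"

definition OtD_Phi :: "(('x,'y) ext \<Rightarrow> bool) set" where
  "OtD_Phi = {ind x | x. True}"

(* OtD(F) = (T_F, H), a teacher class over X' = ('x,'y) ext, Y = 'y, Phi = OtD_Phi *)
definition OtD :: "('x \<Rightarrow> 'y) set \<Rightarrow> ((('x,'y) ext, 'y) teacher set \<times> (('x,'y) ext \<times> 'y) set)" where
  "OtD F = (teacher_of ` F, OtD_hist)"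

end

theory Submission
  imports Defs
begin

primrec build :: "('x,'y) ltree \<Rightarrow> 'y option \<Rightarrow> (('x,'y) ext \<Rightarrow> bool) option
   \<Rightarrow> (('x,'y) ext \<times> 'y) set \<Rightarrow> (('x,'y) ext,'y) dtree" where
  "build LLeaf lab ft acc = DNode lab ft None (\<lambda>_. None)"
| "build (LInner x a l b r) lab ft acc = DNode lab ft (Some (Orig x))
     (\<lambda>e. if e \<in> OtD_hist \<union> acc then Some (if snd e \<noteq> a
        then build l (Some a) (Some (ind (Orig x))) (insert (Orig x, a) acc)
        else build r (Some b) (Some (ind (Orig x))) (insert (Orig x, b) acc)) else None)"

lemma is_node_Nil[simp]: "is_node t []" by (simp add: is_node_def)
lemma nd_Nil[simp]: "nd t [] = t" by (simp add: nd_def)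

lemma is_node_Cons: "is_node t (e#es) \<longleftrightarrow> (\<exists>c. dch t e = Some c \<and> is_node c es)"
  by (auto simp: is_node_def split: option.splits)

lemma nd_Cons: "dch t e = Some c \<Longrightarrow> nd t (e#es) = nd c es"
  by (simp add: nd_def)

lemma path_examples_Cons: "dch t e = Some c \<Longrightarrow> path_examples t (e#es) =
   {(x,y). dpt t = Some x \<and> dlab c = Some y} \<union> path_examples c es"
proof -
  assume c: "dch t e = Some c"
  have nd': "\<And>j. nd t (take (Suc j) (e#es)) = nd c (take j es)" using c by (simp add: nd_Cons)
  show ?thesis
  proof (rule set_eqI, rule iffI)
    fix z assume "z \<in> path_examples t (e#es)"
    then obtain i x y where z: "z = (x,y)" "i < Suc (length es)" "dpt (nd t (take i (e#es))) = Some x"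
      "dlab (nd t (take (Suc i) (e#es))) = Some y" by (auto simp: path_examples_def)
    show "z \<in> {(x,y). dpt t = Some x \<and> dlab c = Some y} \<union> path_examples c es"
    proof (cases i)
      case 0 then show ?thesis using z c by (simp add: nd_Cons)
    next
      case (Suc j) then show ?thesis using z nd' unfolding path_examples_def by auto
    qed
  next
    fix z assume "z \<in> {(x,y). dpt t = Some x \<and> dlab c = Some y} \<union> path_examples c es"
    then show "z \<in> path_examples t (e#es)"
    proof
      assume "z \<in> {(x,y). dpt t = Some x \<and> dlab c = Some y}"
      then show ?thesis unfolding path_examples_def
        apply clarsimp apply (rule exI[of _ 0]) using c by (simp add: nd_Cons)
    next
      assume "z \<in> path_examples c es"
      then obtain j x y where "z = (x,y)" "j < length es" "dpt (nd c (take j es)) = Some x"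
        "dlab (nd c (take (Suc j) es)) = Some y" by (auto simp: path_examples_def)
      then show ?thesis unfolding path_examples_def
        apply clarsimp apply (rule exI[of _ "Suc j"]) using c by (simp add: nd_Cons)
    qed
  qed
qed

lemma all_less_Suc_conv: "(\<forall>i < Suc n. P i) \<longleftrightarrow> P 0 \<and> (\<forall>j < n. P (Suc j))"
  using less_Suc_eq_0_disj by auto

lemma path_consistent_Cons: "dch t e = Some c \<Longrightarrow> path_consistent t (e#es) T \<longleftrightarrow>
   ((\<forall>x. dpt t = Some x \<longrightarrow> dlab c = Some (fst T x) \<and>
       (fst T x \<noteq> snd e \<longrightarrow> snd T x (fst e) = dfeat c)) \<and> path_consistent c es T)"
proof -
  assume c: "dch t e = Some c"
  have nd': "\<And>j. nd t (take (Suc j) (e#es)) = nd c (take j es)" using c by (simp add: nd_Cons)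
  have A: "path_consistent t (e#es) T \<longleftrightarrow>
     (\<forall>i < Suc (length es). \<forall>x. dpt (nd t (take i (e#es))) = Some x \<longrightarrow>
        (dlab (nd t (take (Suc i) (e#es))) = Some (fst T x) \<and>
         (fst T x \<noteq> snd ((e#es) ! i) \<longrightarrow> snd T x (fst ((e#es) ! i)) = dfeat (nd t (take (Suc i) (e#es))))))"
    by (simp add: path_consistent_def)
  also have "\<dots> \<longleftrightarrow> ((\<forall>x. dpt t = Some x \<longrightarrow> dlab c = Some (fst T x) \<and>
       (fst T x \<noteq> snd e \<longrightarrow> snd T x (fst e) = dfeat c)) \<and> path_consistent c es T)"
    unfolding all_less_Suc_conv path_consistent_def
    using c by (simp del: take_Suc_Cons add: nd' nd_Cons)
  finally show ?thesis .
qed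



lemma hist_mem: "(Star y, y) \<in> OtD_hist" by (auto simp: OtD_hist_def)

lemma build_sel[simp]: "dlab (build lt lab ft acc) = lab" "dfeat (build lt lab ft acc) = ft"
  by (cases lt; simp)+

lemma build_leaf: "is_leaf (build lt lab ft acc) \<longleftrightarrow> lt = LLeaf"
  "dpt (build lt lab ft acc) = None \<longleftrightarrow> lt = LLeaf"
  by (cases lt; auto simp: is_leaf_def intro: hist_mem)+

lemma build_struct:
  "is_node (build lt lab ft acc) p \<Longrightarrow> lcomplete lt d \<Longrightarrow> \<exists>lt' lab' ft' acc'. nd (build lt lab ft acc) p = build lt' lab' ft' acc'
    \<and> acc' = acc \<union> path_examples (build lt lab ft acc) p
    \<and> (p \<noteq> [] \<longrightarrow> (\<exists>x. ft' = Some (ind (Orig x))) \<and> lab' \<noteq> Some (snd (last p)))"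
proof (induction lt arbitrary: lab ft acc p d)
  case LLeaf
  show ?case
  proof (cases p)
    case Nil then show ?thesis
      by (intro exI[of _ LLeaf] exI[of _ lab] exI[of _ ft] exI[of _ acc]) (simp add: path_examples_def)
  next
    case Cons then show ?thesis using LLeaf by (auto simp: is_node_Cons)
  qed
next
  case (LInner x a l b r)
  show ?case
  proof (cases p)
    case Nil then show ?thesis
      by (intro exI[of _ "LInner x a l b r"] exI[of _ lab] exI[of _ ft] exI[of _ acc]) (simp add: path_examples_def)
  next
    case (Cons e es)
    obtain n where d: "d = Suc n" "lcomplete l n" "lcomplete r n" "a \<noteq> b"
      using LInner.prems(2) by (cases d) auto
    show ?thesis
    proof (cases "snd e \<noteq> a")
      case True
      define c where "c = build l (Some a) (Some (ind (Orig x))) (insert (Orig x, a) acc)"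
      have ch: "dch (build (LInner x a l b r) lab ft acc) e = Some c"
        using LInner.prems Cons True by (auto simp: is_node_Cons c_def split: if_splits)
      have nc: "is_node c es" using LInner.prems Cons ch by (auto simp: is_node_Cons)
      from LInner.IH(1)[OF nc[unfolded c_def] d(2)] obtain lt' lab' ft' acc' where
        IH: "nd c es = build lt' lab' ft' acc'" "acc' = insert (Orig x, a) acc \<union> path_examples c es"
         "es \<noteq> [] \<longrightarrow> (\<exists>x. ft' = Some (ind (Orig x))) \<and> lab' \<noteq> Some (snd (last es))"
        unfolding c_def by blast
      have pe: "path_examples (build (LInner x a l b r) lab ft acc) p = insert (Orig x, a) (path_examples c es)"
        using path_examples_Cons[OF ch] Cons by (auto simp: c_def)
      have "es = [] \<Longrightarrow> lab' = Some a \<and> ft' = Some (ind (Orig x))"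
        using IH(1) by (metis build_sel nd_Nil c_def)
      then show ?thesis using IH pe Cons ch True
        by (intro exI[of _ lt'] exI[of _ lab'] exI[of _ ft'] exI[of _ acc']) (auto simp: nd_Cons)
    next
      case False
      define c where "c = build r (Some b) (Some (ind (Orig x))) (insert (Orig x, b) acc)"
      have ch: "dch (build (LInner x a l b r) lab ft acc) e = Some c"
        using LInner.prems Cons False by (auto simp: is_node_Cons c_def split: if_splits)
      have nc: "is_node c es" using LInner.prems Cons ch by (auto simp: is_node_Cons)
      from LInner.IH(2)[OF nc[unfolded c_def] d(3)] obtain lt' lab' ft' acc' where
        IH: "nd c es = build lt' lab' ft' acc'" "acc' = insert (Orig x, b) acc \<union> path_examples c es"
         "es \<noteq> [] \<longrightarrow> (\<exists>x. ft' = Some (ind (Orig x))) \<and> lab' \<noteq> Some (snd (last es))"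
        unfolding c_def by blast
      have pe: "path_examples (build (LInner x a l b r) lab ft acc) p = insert (Orig x, b) (path_examples c es)"
        using path_examples_Cons[OF ch] Cons by (auto simp: c_def)
      have "es = [] \<Longrightarrow> lab' = Some b \<and> ft' = Some (ind (Orig x))"
        using IH(1) by (metis build_sel nd_Nil c_def)
      then show ?thesis using IH pe Cons ch False d(4)
        by (intro exI[of _ lt'] exI[of _ lab'] exI[of _ ft'] exI[of _ acc']) (auto simp: nd_Cons)
    qed
  qed
qed

lemma build_depth:
  "is_node (build lt lab ft acc) p \<Longrightarrow> lcomplete lt d \<Longrightarrow> is_leaf (nd (build lt lab ft acc) p) \<Longrightarrow> length p = d"
proof (induction lt arbitrary: lab ft acc p d)
  case LLeaf
  then show ?case by (cases p) (auto simp: is_node_Cons)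
next
  case (LInner x a l b r)
  show ?case
  proof (cases p)
    case Nil then show ?thesis using LInner.prems by (metis build_leaf(1) nd_Nil ltree.distinct(1))
  next
    case (Cons e es)
    obtain n where d: "d = Suc n" "lcomplete l n" "lcomplete r n"
      using LInner.prems(2) by (cases d) auto
    show ?thesis
    proof (cases "snd e \<noteq> a")
      case True
      define c where "c = build l (Some a) (Some (ind (Orig x))) (insert (Orig x, a) acc)"
      have ch: "dch (build (LInner x a l b r) lab ft acc) e = Some c"
        using LInner.prems Cons True by (auto simp: is_node_Cons c_def split: if_splits)
      have nc: "is_node c es" using LInner.prems Cons ch by (auto simp: is_node_Cons)
      have "length es = n" using LInner.IH(1)[OF nc[unfolded c_def] d(2)] LInner.prems(3) Cons ch
        by (simp add: nd_Cons c_def)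
      then show ?thesis using Cons d by simp
    next
      case False
      define c where "c = build r (Some b) (Some (ind (Orig x))) (insert (Orig x, b) acc)"
      have ch: "dch (build (LInner x a l b r) lab ft acc) e = Some c"
        using LInner.prems Cons False by (auto simp: is_node_Cons c_def split: if_splits)
      have nc: "is_node c es" using LInner.prems Cons ch by (auto simp: is_node_Cons)
      have "length es = n" using LInner.IH(2)[OF nc[unfolded c_def] d(3)] LInner.prems(3) Cons ch
        by (simp add: nd_Cons c_def)
      then show ?thesis using Cons d by simp
    qed
  qed
qed

lemma build_consistent:
  "is_node (build lt lab ft acc) p \<Longrightarrow> is_leaf (nd (build lt lab ft acc) p) \<Longrightarrow>
   \<exists>q\<in>lpaths lt. \<forall>f. (\<forall>(x,y)\<in>set q. f x = y) \<longrightarrow> path_consistent (build lt lab ft acc) p (teacher_of f)"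
proof (induction lt arbitrary: lab ft acc p)
  case LLeaf
  then show ?case by (cases p) (auto simp: is_node_Cons path_consistent_def)
next
  case (LInner x a l b r)
  show ?case
  proof (cases p)
    case Nil then show ?thesis using LInner.prems by (metis build_leaf(1) nd_Nil ltree.distinct(1))
  next
    case (Cons e es)
    show ?thesis
    proof (cases "snd e \<noteq> a")
      case True
      define c where "c = build l (Some a) (Some (ind (Orig x))) (insert (Orig x, a) acc)"
      have ch: "dch (build (LInner x a l b r) lab ft acc) e = Some c"
        using LInner.prems Cons True by (auto simp: is_node_Cons c_def split: if_splits)
      have nc: "is_node c es" using LInner.prems Cons ch by (auto simp: is_node_Cons)
      obtain q where q: "q \<in> lpaths l" "\<forall>f. (\<forall>(x,y)\<in>set q. f x = y) \<longrightarrow> path_consistent c es (teacher_of f)"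
        using LInner.IH(1)[OF nc[unfolded c_def]] LInner.prems(2) Cons ch
        by (auto simp: nd_Cons c_def)
      show ?thesis
        apply (rule bexI[of _ "(x,a) # q"])
        using q unfolding Cons path_consistent_Cons[OF ch]
        by (auto simp: c_def teacher_of_def)
    next
      case False
      define c where "c = build r (Some b) (Some (ind (Orig x))) (insert (Orig x, b) acc)"
      have ch: "dch (build (LInner x a l b r) lab ft acc) e = Some c"
        using LInner.prems Cons False by (auto simp: is_node_Cons c_def split: if_splits)
      have nc: "is_node c es" using LInner.prems Cons ch by (auto simp: is_node_Cons)
      obtain q where q: "q \<in> lpaths r" "\<forall>f. (\<forall>(x,y)\<in>set q. f x = y) \<longrightarrow> path_consistent c es (teacher_of f)"
        using LInner.IH(2)[OF nc[unfolded c_def]] LInner.prems(2) Cons ch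
        by (auto simp: nd_Cons c_def)
      show ?thesis
        apply (rule bexI[of _ "(x,b) # q"])
        using q unfolding Cons path_consistent_Cons[OF ch]
        by (auto simp: c_def teacher_of_def)
    qed
  qed
qed


lemma out_labels_build: "lt \<noteq> LLeaf \<Longrightarrow> out_labels (build lt lab ft acc) = OtD_hist \<union> acc"
  by (cases lt) (auto simp: out_labels_def)

lemma build_shattered:
  assumes lc: "lcomplete lt d" and sh: "\<forall>q \<in> lpaths lt. \<exists>f \<in> F. \<forall>(x,y) \<in> set q. f x = y"
  shows "dff_shattered OtD_Phi (teacher_of ` F) OtD_hist (build lt None None {}) d"
proof -
  let ?t = "build lt None None {}"
  have S: "\<And>p. is_node ?t p \<Longrightarrow> \<exists>lt' lab' ft' acc'. nd ?t p = build lt' lab' ft' acc'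
    \<and> acc' = path_examples ?t p
    \<and> (p \<noteq> [] \<longrightarrow> (\<exists>x. ft' = Some (ind (Orig x))) \<and> lab' \<noteq> Some (snd (last p)))"
    using build_struct[OF _ lc] by fastforce
  have A: "\<forall>p. is_node ?t p \<longrightarrow> (dpt (nd ?t p) = None \<longleftrightarrow> is_leaf (nd ?t p))"
    using S build_leaf by metis
  have B: "\<forall>p. is_node ?t p \<longrightarrow> (\<forall>\<phi>. dfeat (nd ?t p) = Some \<phi> \<longrightarrow> \<phi> \<in> OtD_Phi)"
  proof (intro allI impI)
    fix p \<phi> assume n: "is_node ?t p" and f: "dfeat (nd ?t p) = Some \<phi>"
    show "\<phi> \<in> OtD_Phi"
    proof (cases "p = []")
      case True then show ?thesis using f by simp
    next
      case False then show ?thesis using S[OF n] f by (auto simp: OtD_Phi_def)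
    qed
  qed
  have C: "\<forall>p e. is_node ?t (p @ [e]) \<longrightarrow> dlab (nd ?t (p @ [e])) \<noteq> Some (snd e) \<and> dfeat (nd ?t (p @ [e])) \<noteq> None"
  proof (intro allI impI)
    fix p e assume n: "is_node ?t (p @ [e])"
    from S[OF n] show "dlab (nd ?t (p @ [e])) \<noteq> Some (snd e) \<and> dfeat (nd ?t (p @ [e])) \<noteq> None"
      by auto
  qed
  have D: "\<forall>p. is_node ?t p \<and> \<not> is_leaf (nd ?t p) \<longrightarrow> out_labels (nd ?t p) = OtD_hist \<union> path_examples ?t p"
  proof (intro allI impI)
    fix p assume n: "is_node ?t p \<and> \<not> is_leaf (nd ?t p)"
    from S[OF conjunct1[OF n]] obtain lt' lab' ft' acc' where
      "nd ?t p = build lt' lab' ft' acc'" "acc' = path_examples ?t p" by blast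
    then show "out_labels (nd ?t p) = OtD_hist \<union> path_examples ?t p"
      using n out_labels_build build_leaf by metis
  qed
  have E: "\<forall>p. is_node ?t p \<and> is_leaf (nd ?t p) \<longrightarrow>
        (\<exists>T \<in> teachers_consistent (teacher_of ` F) OtD_hist. path_consistent ?t p T)"
  proof (intro allI impI)
    fix p assume n: "is_node ?t p \<and> is_leaf (nd ?t p)"
    from build_consistent[of lt None None "{}" p] n obtain q where
      q: "q \<in> lpaths lt" "\<forall>f. (\<forall>(x,y)\<in>set q. f x = y) \<longrightarrow> path_consistent ?t p (teacher_of f)"
      by blast
    from sh q(1) obtain f where f: "f \<in> F" "\<forall>(x,y) \<in> set q. f x = y" by blast
    have "teacher_of f \<in> teachers_consistent (teacher_of ` F) OtD_hist"
      using f(1) by (auto simp: teachers_consistent_def consistent_hist_def OtD_hist_def teacher_of_def)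
    then show "\<exists>T \<in> teachers_consistent (teacher_of ` F) OtD_hist. path_consistent ?t p T"
      using q(2) f(2) by blast
  qed
  have G: "\<forall>p. is_node ?t p \<and> is_leaf (nd ?t p) \<longrightarrow> length p = d"
    using build_depth[OF _ lc] by blast
  show ?thesis unfolding dff_shattered_def dff_tree_def
    using A B C D E G by simp
qed

theorem mainTheorem9:
  fixes F :: "('x \<Rightarrow> 'y::finite) set"
  shows "Ldim F \<le> DFFdim OtD_Phi (fst (OtD F)) (snd (OtD F))"
proof -
  have "{enat d | d. \<exists>t. lcomplete t d \<and> (\<forall>q \<in> lpaths t. \<exists>f \<in> F. \<forall>(x,y) \<in> set q. f x = y)}
     \<subseteq> {enat d | d. \<exists>t. dff_shattered OtD_Phi (teacher_of ` F) OtD_hist t d}"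
    using build_shattered by blast
  then show ?thesis unfolding Ldim_def DFFdim_def OtD_def by (simp add: Sup_subset_mono)
qed

end
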